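(* Let $v_1\ge v_2\ge v_3\ge v_4>0$ and $p_{ij}=\frac{v_i}{v_i+v_j}$. Let $T_A,T_B,T_C$ be the probabilities that team $a_1$ wins the four-team knockout tournament of type $A$, $B$, $C$ respectively (defined in the context). Then $T_A\ge T_B\ge T_C$.
   Context: Four teams $a_1,\dots,a_4$ with weights $v_1,\dots,v_4$. In any game between $a_i$ and $a_j$, $a_i$ wins with probability $p_{ij}=v_i/(v_i+v_j)$, independently of other games. A knockout tournament consists of two first-round games whose winners meet in a final. Tournament $A$: first round $a_1$ vs $a_4$ and $a_2$ vs $a_3$. Tournament $B$: first round $a_1$ vs $a_3$ and $a_2$ vs $a_4$. Tournament $C$: first round $a_1$ vs $a_2$ and $a_3$ vs $a_4$. *)

theory Defs
  imports Main "HOL.Real"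
begin

text \<open>Teams are indexed 1..4; v :: nat \<Rightarrow> real gives the weights.
  Probability that team i beats team j in a single game.\<close>
definition pwin :: "(nat \<Rightarrow> real) \<Rightarrow> nat \<Rightarrow> nat \<Rightarrow> real" where
  "pwin v i j = v i / (v i + v j)"

text \<open>Probability that team 1 wins a knockout tournament whose first round is
  team 1 vs team b and team c vs team d (games independent): team 1 must beat b,
  then beat whichever of c, d wins the other game.\<close>
definition win1 :: "(nat \<Rightarrow> real) \<Rightarrow> nat \<Rightarrow> nat \<Rightarrow> nat \<Rightarrow> real" where
  "win1 v b c d = pwin v 1 b * (pwin v c d * pwin v 1 c + pwin v d c * pwin v 1 d)"

definition T_A :: "(nat \<Rightarrow> real) \<Rightarrow> real" where "T_A v = win1 v 4 2 3"
definition T_B :: "(nat \<Rightarrow> real) \<Rightarrow> real" where "T_B v = win1 v 3 2 4"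
definition T_C :: "(nat \<Rightarrow> real) \<Rightarrow> real" where "T_C v = win1 v 2 3 4"

end

theory Submission
  imports Defs
begin

theorem theorem2:
  fixes v :: "nat \<Rightarrow> real"
  assumes "v 1 \<ge> v 2" and "v 2 \<ge> v 3" and "v 3 \<ge> v 4" and "v 4 > 0"
  shows "T_A v \<ge> T_B v \<and> T_B v \<ge> T_C v"
proof -
  define a where "a = v 1"
  define b where "b = v 2"
  define c where "c = v 3"
  define d where "d = v 4"
  have d0: "d > 0" and cd: "c \<ge> d" and bc: "b \<ge> c" and ab: "a \<ge> b"
    using assms by (auto simp: a_def b_def c_def d_def)
  have c0: "c > 0" using cd d0 by linarith
  have b0: "b > 0" using bc c0 by linarith
  have a0: "a > 0" using ab b0 by linarith
  have nz: "a+b \<noteq> 0" "a+c \<noteq> 0" "a+d \<noteq> 0" "b+c \<noteq> 0" "b+d \<noteq> 0" "c+d \<noteq> 0"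
    "c+b \<noteq> 0" "d+b \<noteq> 0" "d+c \<noteq> 0" using a0 b0 c0 d0 by linarith+
  have A: "T_A v = a/(a+d) * (b/(b+c)*(a/(a+b)) + c/(c+b)*(a/(a+c)))"
    by (simp add: T_A_def win1_def pwin_def a_def b_def c_def d_def)
  have B: "T_B v = a/(a+c) * (b/(b+d)*(a/(a+b)) + d/(d+b)*(a/(a+d)))"
    by (simp add: T_B_def win1_def pwin_def a_def b_def c_def d_def)
  have C: "T_C v = a/(a+b) * (c/(c+d)*(a/(a+c)) + d/(d+c)*(a/(a+d)))"
    by (simp add: T_C_def win1_def pwin_def a_def b_def c_def d_def)
  have e1: "T_A v - T_B v = 2*a^2*b^2*(c-d) / ((a+b)*(a+c)*(a+d)*(b+c)*(b+d))"
  proof -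
    have "(a+b)*(a+c)*(a+d)*(b+c)*(b+d) \<noteq> 0" using nz by simp
    moreover have "(T_A v - T_B v) * ((a+b)*(a+c)*(a+d)*(b+c)*(b+d)) = 2*a^2*b^2*(c-d)"
      unfolding A B using nz by (simp add: divide_simps) algebra
    ultimately show ?thesis by (simp add: eq_divide_eq)
  qed
  have e2: "T_B v - T_C v = 2*a^2*d^2*(b-c) / ((a+b)*(a+c)*(a+d)*(b+d)*(c+d))"
  proof -
    have "(a+b)*(a+c)*(a+d)*(b+d)*(c+d) \<noteq> 0" using nz by simp
    moreover have "(T_B v - T_C v) * ((a+b)*(a+c)*(a+d)*(b+d)*(c+d)) = 2*a^2*d^2*(b-c)"
      unfolding B C using nz by (simp add: divide_simps) algebra
    ultimately show ?thesis by (simp add: eq_divide_eq)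
  qed
  have "0 \<le> T_A v - T_B v" unfolding e1 using a0 b0 c0 d0 cd by simp
  moreover have "0 \<le> T_B v - T_C v" unfolding e2 using a0 b0 c0 d0 bc by simp
  ultimately show ?thesis by linarith
qed

end
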